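(* Let $q\ge 2$ and let $n,k$ be positive integers with $5\le k\le n$. Then $$q^n\Big(\frac{q-1}{q}\Big)^{c_2\frac{n}{q^{k-1}}}\,e^{-\frac{c_2}{c_1}\frac{n}{q^{1.5k-1}}}\;\le\; a_q(n,k)\;\le\; q^{\,n- c_3\frac{n-2k}{q^k}},$$ where $c_1=\frac{(q-1)q^{\lceil k/2\rceil-k/2}}{2q}$, $c_2=\frac{\lfloor n/q^{k-1}\rfloor+1}{n/q^{k-1}}$ and $c_3=\frac{(\log_q e)(q-1)^2}{2q^{2}}$.
   Context: $\Sigma_q=\{0,1,\dots,q-1\}$. A vector $\vec a=(a_1,\dots,a_n)\in\Sigma_q^n$ is a $k$-RLL vector if $n<k$ or every window $(a_i,\dots,a_{i+k-1})$, $i\in[1,n-k+1]$, contains a nonzero symbol (i.e. $\vec a$ has no run of $k$ consecutive zeros). $A_q(n,k)$ is the set of $k$-RLL vectors in $\Sigma_q^n$ and $a_q(n,k)=|A_q(n,k)|$. *)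

theory Defs
  imports Complex_Main
begin

text \<open>Vectors in Sigma_q^n are lists of length n with entries in {0..<q}.
  Positions are 0-based: window starting at i covers indices i..i+k-1.\<close>

definition is_RLL :: "nat \<Rightarrow> nat list \<Rightarrow> bool" where
  "is_RLL k a \<longleftrightarrow> length a < k \<or>
     (\<forall>i. i + k \<le> length a \<longrightarrow> (\<exists>j\<in>{i..<i+k}. a ! j \<noteq> 0))"

definition A_set :: "nat \<Rightarrow> nat \<Rightarrow> nat \<Rightarrow> nat list set" where
  "A_set q n k = {a. length a = n \<and> set a \<subseteq> {0..<q} \<and> is_RLL k a}"

definition a_count :: "nat \<Rightarrow> nat \<Rightarrow> nat \<Rightarrow> nat" where
  "a_count q n k = card (A_set q n k)"

end

theory Submission
  imports Defs
begin


definition NR :: "nat \<Rightarrow> nat list \<Rightarrow> bool" where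
 "NR k a \<longleftrightarrow> \<not> (\<exists>us vs. a = us @ replicate k 0 @ vs)"

lemma RLL_iff: "is_RLL k a \<longleftrightarrow> NR k a"
proof
  assume h: "is_RLL k a"
  show "NR k a"
  proof (unfold NR_def, rule notI)
    assume "\<exists>us vs. a = us @ replicate k 0 @ vs"
    then obtain us vs where a: "a = us @ replicate k 0 @ vs" by blast
    have "\<not> length a < k" using a by simp
    with h have "\<forall>i. i + k \<le> length a \<longrightarrow> (\<exists>j\<in>{i..<i+k}. a ! j \<noteq> 0)" unfolding is_RLL_def by blast
    moreover have "length us + k \<le> length a" using a by simp
    ultimately obtain j where j: "j \<in> {length us..<length us+k}" "a ! j \<noteq> 0" by blast
    moreover have "a ! j = 0" using j(1) a by (auto simp: nth_append)
    ultimately show False by simp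
  qed
next
  assume h: "NR k a"
  show "is_RLL k a"
  proof (rule ccontr)
    assume "\<not> is_RLL k a"
    then obtain i where i: "i + k \<le> length a" and z: "\<forall>j\<in>{i..<i+k}. a ! j = 0"
      unfolding is_RLL_def by auto
    have t: "take k (drop i a) = replicate k 0"
      by (rule nth_equalityI) (use i z in auto)
    have "a = take i a @ take k (drop i a) @ drop (i+k) a"
      by (metis append_take_drop_id add.commute drop_drop)
    with t h show False unfolding NR_def by metis
  qed
qed

lemma NR_append: "NR k (ys @ zs) \<Longrightarrow> NR k zs"
  unfolding NR_def by (metis append.assoc)

lemma NR_tl: "NR k (x # zs) \<Longrightarrow> NR k zs"
  using NR_append[of k "[x]" zs] by simp

lemma A_iff: "xs \<in> A_set q n k \<longleftrightarrow> length xs = n \<and> set xs \<subseteq> {0..<q} \<and> NR k xs"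
  unfolding A_set_def by (simp add: RLL_iff)

lemma A_sub: "A_set q n k \<subseteq> {xs. set xs \<subseteq> {0..<q} \<and> length xs = n}"
  unfolding A_set_def by auto

lemma A_fin: "finite (A_set q n k)"
  by (rule finite_subset[OF A_sub]) (simp add: finite_lists_length_eq)

lemma A_small: "n < k \<Longrightarrow> A_set q n k = {xs. set xs \<subseteq> {0..<q} \<and> length xs = n}"
  unfolding A_set_def is_RLL_def by auto

lemma a_small: "n < k \<Longrightarrow> a_count q n k = q ^ n"
  unfolding a_count_def by (simp add: A_small card_lists_length_eq)

lemma a_le: "a_count q n k \<le> q ^ n"
  unfolding a_count_def
  using card_mono[OF _ A_sub, of q n k] by (simp add: card_lists_length_eq finite_lists_length_eq)

lemma a_k: assumes "q \<ge> 1" shows "a_count q k k \<ge> q ^ k - 1"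
proof -
  let ?L = "{xs. set xs \<subseteq> {0..<q} \<and> length xs = k}"
  have "?L - {replicate k 0} \<subseteq> A_set q k k"
  proof
    fix xs assume h: "xs \<in> ?L - {replicate k 0}"
    have "NR k xs" unfolding NR_def
    proof
      assume "\<exists>us vs. xs = us @ replicate k 0 @ vs"
      then obtain us vs where e: "xs = us @ replicate k 0 @ vs" by blast
      with h have "us = []" "vs = []" by auto
      with e h show False by auto
    qed
    with h show "xs \<in> A_set q k k" by (simp add: A_iff)
  qed
  moreover have "replicate k 0 \<in> ?L" using assms by auto
  ultimately have "card ?L - 1 \<le> a_count q k k" unfolding a_count_def
    by (metis A_fin card_Diff_singleton card_mono)
  then show ?thesis by (simp add: card_lists_length_eq)
qed

lemma A_Suc_sub: "A_set q (Suc n) k \<subseteq> (\<lambda>(x,xs). x # xs) ` ({0..<q} \<times> A_set q n k)"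
proof
  fix a assume a: "a \<in> A_set q (Suc n) k"
  then obtain x xs where e: "a = x # xs" by (cases a) (auto simp: A_iff)
  with a have "x < q" "xs \<in> A_set q n k" by (auto simp: A_iff dest: NR_tl)
  with e show "a \<in> (\<lambda>(x,xs). x # xs) ` ({0..<q} \<times> A_set q n k)" by auto
qed

lemma a_Suc_le: "a_count q (Suc n) k \<le> q * a_count q n k"
proof -
  have "a_count q (Suc n) k \<le> card ((\<lambda>(x,xs). x # xs) ` ({0..<q} \<times> A_set q n k))"
    unfolding a_count_def by (rule card_mono[OF _ A_Suc_sub]) (simp add: A_fin)
  also have "\<dots> \<le> card ({0..<q} \<times> A_set q n k)" by (rule card_image_le) (simp add: A_fin)
  finally show ?thesis by (simp add: a_count_def card_cartesian_product)
qed

lemma NR_block: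
  assumes "k \<ge> 1" "y \<noteq> 0" "NR k zs"
  shows "NR k (replicate (k-1) 0 @ y # zs)"
  unfolding NR_def
proof
  assume "\<exists>us vs. replicate (k-1) 0 @ y # zs = us @ replicate k 0 @ vs"
  then obtain us vs where e: "replicate (k-1) 0 @ y # zs = us @ replicate k 0 @ vs" by blast
  show False
  proof (cases "length us \<ge> k")
    case True
    have "drop k (replicate (k-1) 0 @ y # zs) = zs" using assms(1)
      by (simp add: drop_append)
    moreover have "drop k (us @ replicate k 0 @ vs) = drop k us @ replicate k 0 @ vs"
      using True by simp
    ultimately show False using e assms(3) unfolding NR_def by metis
  next
    case False
    have "(replicate (k-1) 0 @ y # zs) ! (k-1) = y" by (simp add: nth_append)
    have "length us \<le> k - 1" using False by simp
    then have "(us @ replicate k 0 @ vs) ! (k-1) = 0" using assms(1)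
      by (simp add: nth_append)
    moreover note \<open>(replicate (k-1) 0 @ y # zs) ! (k-1) = y\<close>
    ultimately show False using e assms(2) by simp
  qed
qed

lemma A_Suc_eq:
  assumes "k \<ge> 1" "n \<ge> k"
  shows "A_set q (Suc n) k = (\<lambda>(x,xs). x # xs) ` ({0..<q} \<times> A_set q n k)
          - (\<lambda>(y,zs). 0 # replicate (k-1) 0 @ y # zs) ` ({1..<q} \<times> A_set q (n-k) k)"
    (is "?A = ?C - ?B")
proof
  show "?A \<subseteq> ?C - ?B"
  proof
    fix a assume a: "a \<in> ?A"
    have "a \<notin> ?B"
    proof
      assume "a \<in> ?B"
      then obtain y zs where "a = 0 # replicate (k-1) 0 @ y # zs" by auto
      then have "a = [] @ replicate k 0 @ y # zs" using assms(1)
        by (metis Suc_diff_le append_Cons append_Nil diff_Suc_1 replicate_Suc)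
      with a show False unfolding A_iff NR_def by blast
    qed
    with a A_Suc_sub show "a \<in> ?C - ?B" by blast
  qed
next
  show "?C - ?B \<subseteq> ?A"
  proof
    fix a assume a: "a \<in> ?C - ?B"
    then obtain x xs where e: "a = x # xs" and x: "x < q" and xs: "xs \<in> A_set q n k" by auto
    have "NR k a"
    proof (rule ccontr)
      assume "\<not> NR k a"
      then obtain us vs where e2: "a = us @ replicate k 0 @ vs" unfolding NR_def by blast
      show False
      proof (cases us)
        case (Cons u us')
        with e e2 have "xs = us' @ replicate k 0 @ vs" by simp
        with xs show False by (auto simp: A_iff NR_def)
      next
        case Nil
        have rk: "replicate k (0::nat) = 0 # replicate (k-1) 0" using assms(1)
          by (metis Suc_diff_le diff_Suc_1 replicate_Suc)
        with Nil e e2 have x0: "x = 0" and xse: "xs = replicate (k-1) 0 @ vs" by auto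
        from xs xse assms have "length vs = n - k + 1" by (auto simp: A_iff)
        then obtain y zs where v: "vs = y # zs" by (cases vs) auto
        have "y \<noteq> 0"
        proof
          assume "y = 0"
          then have "xs = [] @ replicate k 0 @ zs" using xse v rk
            by (metis append.assoc append_Cons append_Nil replicate_app_Cons_same)
          with xs show False unfolding A_iff NR_def by blast
        qed
        moreover have "y < q" using xs xse v by (auto simp: A_iff)
        moreover have "zs \<in> A_set q (n-k) k"
          using xs xse v \<open>length vs = n - k + 1\<close> by (auto simp: A_iff dest: NR_append NR_tl)
        ultimately have "a \<in> ?B" using e x0 xse v by force
        with a show False by blast
      qed
    qed
    with e x xs show "a \<in> ?A" by (auto simp: A_iff)
  qed
qed

lemma a_rec:
  assumes "k \<ge> 1" "n \<ge> k" "q \<ge> 1"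
  shows "real (a_count q (Suc n) k) = real q * a_count q n k - (real q - 1) * a_count q (n-k) k"
proof -
  let ?C = "(\<lambda>(x,xs). x # xs) ` ({0..<q} \<times> A_set q n k)"
  let ?B = "(\<lambda>(y,zs). 0 # replicate (k-1) 0 @ y # zs) ` ({1..<q} \<times> A_set q (n-k) k)"
  have sub: "?B \<subseteq> ?C"
  proof
    fix b assume "b \<in> ?B"
    then obtain y zs where b: "b = 0 # (replicate (k-1) 0 @ y # zs)" and y: "1 \<le> y" "y < q"
      and zs: "zs \<in> A_set q (n-k) k" by auto
    have "replicate (k-1) 0 @ y # zs \<in> A_set q n k"
      using zs y assms NR_block[of k y zs] by (auto simp: A_iff)
    then show "b \<in> ?C" using b assms by force
  qed
  have cC: "card ?C = q * a_count q n k"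
    by (subst card_image) (auto simp: inj_on_def a_count_def card_cartesian_product)
  have cB: "card ?B = (q - 1) * a_count q (n-k) k"
    by (subst card_image) (auto simp: inj_on_def a_count_def card_cartesian_product)
  have fC: "finite ?C" by (simp add: A_fin)
  have "a_count q (Suc n) k = card ?C - card ?B"
    unfolding a_count_def using A_Suc_eq[OF assms(1,2), of q] card_Diff_subset[OF finite_subset[OF sub fC] sub]
    by simp
  moreover have "card ?B \<le> card ?C" using card_mono[OF fC sub] .
  ultimately show ?thesis using cC cB assms(3) by (simp add: of_nat_diff)
qed



lemma r_pow:
  fixes q k :: nat
  assumes "q \<ge> 2" "k \<ge> 1"
  shows "(real q - 1/real q^(k-1))^k \<ge> (real q - 1) * real q^(k-1)"
proof -
  have qk: "real q ^ k = real q * real q^(k-1)" using assms(2)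
    by (metis Suc_diff_le diff_Suc_1 power_Suc of_nat_power)
  have pos: "real q^k > 0" using assms by simp
  have r: "real q - 1/real q^(k-1) = real q * (1 + (- 1/real q^k))"
    using pos qk assms by (simp add: field_simps)
  have "(real q - 1/real q^(k-1))^k = real q^k * (1 + (- 1/real q^k))^k"
    unfolding r by (rule power_mult_distrib)
  also have "\<dots> \<ge> real q^k * (1 + real k * (- 1/real q^k))"
    by (rule mult_left_mono[OF Bernoulli_inequality]) (use pos in auto)
  moreover have "real q^k * (1 + real k * (- 1/real q^k)) = real q^k - real k"
    using pos by (simp add: field_simps)
  ultimately have "(real q - 1/real q^(k-1))^k \<ge> real q^k - real k"
    by linarith
  moreover have "real k \<le> real q^(k-1)"
  proof -
    have "k - 1 < 2^(k-1)" by (rule less_exp)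
    also have "(2::nat)^(k-1) \<le> q^(k-1)" using assms by (simp add: power_mono)
    finally have "k \<le> q^(k-1)" using assms by simp
    then show ?thesis by (metis of_nat_le_iff of_nat_power)
  qed
  moreover have "(real q - 1) * real q^(k-1) = real q^k - real q^(k-1)" using qk by (simp add: algebra_simps)
  ultimately show ?thesis by linarith
qed

lemma chain_low:
  fixes f :: "nat \<Rightarrow> real"
  assumes "\<And>m. m < N \<Longrightarrow> f (Suc m) \<ge> r * f m" "r \<ge> 0" "i + d \<le> N"
  shows "f (i + d) \<ge> r^d * f i"
  using assms(3)
proof (induction d)
  case 0 then show ?case by simp
next
  case (Suc d)
  then have "f (i + d) \<ge> r^d * f i" by simp
  then have "r * f (i+d) \<ge> r * (r^d * f i)" using assms(2) by (rule mult_left_mono)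
  moreover have "f (Suc (i + d)) \<ge> r * f (i + d)" using assms(1) Suc.prems by simp
  ultimately show ?case by simp
qed

lemma chain_up:
  fixes f :: "nat \<Rightarrow> real"
  assumes "\<And>m. m \<ge> i \<Longrightarrow> f (Suc m) \<le> r * f m" "r \<ge> 0"
  shows "f (i + d) \<le> r^d * f i"
proof (induction d)
  case 0 then show ?case by simp
next
  case (Suc d)
  then have "r * f (i+d) \<le> r * (r^d * f i)" using assms(2) by (rule mult_left_mono)
  moreover have "f (Suc (i + d)) \<le> r * f (i + d)" using assms(1) by simp
  ultimately show ?case by simp
qed

lemma low_step:
  fixes q k :: nat
  assumes "q \<ge> 2" "k \<ge> 1"
  shows "real (a_count q (Suc n) k) \<ge> (real q - 1/real q^(k-1)) * a_count q n k"
  using assms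
proof (induction n rule: less_induct)
  case (less n)
  define r where "r = real q - 1/real q^(k-1)"
  have qpos: "real q^(k-1) \<ge> 1" using assms by simp
  have "1/real q^(k-1) \<le> 1" using qpos by (simp add: divide_le_eq)
  then have r0: "r \<ge> 0" unfolding r_def using assms by linarith
  have rq: "r \<le> q" unfolding r_def using qpos by simp
  consider "Suc n < k" | "Suc n = k" | "n \<ge> k" by linarith
  then show ?case
  proof cases
    case 1
    then have "real (a_count q (Suc n) k) = real q * a_count q n k" by (simp add: a_small)
    then show ?thesis using rq unfolding r_def[symmetric]
      by (simp add: mult_right_mono)
  next
    case 2
    have "q^k \<ge> 1" using assms by simp
    then have "real (q^k - 1) = real q^k - 1" by (simp add: of_nat_diff)
    moreover have "q^k - 1 \<le> a_count q k k" using a_k[of q k] assms by simp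
    then have "real (q^k - 1) \<le> real (a_count q k k)" by (simp only: of_nat_le_iff)
    ultimately have "real (a_count q k k) \<ge> real q^k - 1" by simp
    moreover have "n = k - 1" using 2 by simp
    then have "real (a_count q n k) = real q^(k-1)" using 2 by (simp add: a_small)
    moreover note \<open>n = k - 1\<close>
    moreover have "real q^k = real q * real q^(k-1)" using assms(2)
      by (metis Suc_diff_le diff_Suc_1 power_Suc)
    ultimately show ?thesis using 2 qpos by (simp add: algebra_simps)
  next
    case 3
    have IH: "\<And>m. m < n \<Longrightarrow> real (a_count q (Suc m) k) \<ge> r * a_count q m k"
      using less.IH assms unfolding r_def by blast
    have nk: "n - k + k \<le> n" using 3 by simp
    have ch: "real (a_count q (n-k+k) k) \<ge> r^k * a_count q (n-k) k"
      by (rule chain_low[where N=n and f="\<lambda>m. real (a_count q m k)", OF IH r0 nk])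
    have rk: "r^k \<ge> (real q - 1) * real q^(k-1)" unfolding r_def by (rule r_pow[OF assms])
    have "(real q - 1) * real q^(k-1) * a_count q (n-k) k \<le> r^k * a_count q (n-k) k"
      by (rule mult_right_mono[OF rk]) simp
    moreover have "n - k + k = n" using 3 by simp
    ultimately have "(real q - 1) * real q^(k-1) * a_count q (n-k) k \<le> a_count q n k"
      using ch by simp
    then have "(real q - 1) * a_count q (n-k) k \<le> a_count q n k / real q^(k-1)"
      using qpos assms by (subst pos_le_divide_eq) (auto simp: ac_simps)
    moreover have "real (a_count q (Suc n) k) = real q * a_count q n k - (real q - 1) * a_count q (n-k) k"
      using a_rec[OF assms(2) 3] assms by simp
    moreover have "r * a_count q n k = real q * a_count q n k - a_count q n k / real q^(k-1)"
      unfolding r_def by (simp add: algebra_simps)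
    ultimately show ?thesis unfolding r_def[symmetric] by linarith
  qed
qed

lemma low_bound:
  fixes q k :: nat
  assumes "q \<ge> 2" "k \<ge> 1"
  shows "real (a_count q n k) \<ge> (real q - 1/real q^(k-1))^n"
proof -
  have qpos: "real q^(k-1) \<ge> 1" using assms by simp
  have "1/real q^(k-1) \<le> 1" using qpos by (simp add: divide_le_eq)
  then have r0: "real q - 1/real q^(k-1) \<ge> 0" using assms by linarith
  have "real (a_count q (0 + n) k) \<ge> (real q - 1/real q^(k-1))^n * a_count q 0 k"
    by (rule chain_low[where N=n and f="\<lambda>m. real (a_count q m k)", OF low_step[OF assms] r0]) simp
  moreover have "a_count q 0 k = 1" using assms by (simp add: a_small)
  ultimately show ?thesis by simp
qed

lemma up_bound:
  fixes q k :: nat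
  assumes "q \<ge> 2" "k \<ge> 1" "n \<ge> k"
  shows "real (a_count q n k) \<le> real q^k * (real q - (real q - 1)/real q^k)^(n-k)"
proof -
  define s where "s = real q - (real q - 1)/real q^k"
  have qpos: "real q^k \<ge> 1" using assms by simp
  have "real q - 1 \<le> (real q - 1) * real q^k" using qpos assms
    by (metis mult_left_mono mult.right_neutral diff_ge_0_iff_ge of_nat_1 of_nat_le_iff le_trans one_le_numeral)
  then have "(real q - 1)/real q^k \<le> real q - 1" using qpos assms by (simp add: divide_le_eq)
  then have s0: "s \<ge> 0" unfolding s_def using assms by linarith
  have stepq: "\<And>m. m \<ge> 0 \<Longrightarrow> real (a_count q (Suc m) k) \<le> real q * a_count q m k"
    using a_Suc_le by (metis of_nat_le_iff of_nat_mult)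
  have step: "\<And>m. m \<ge> k \<Longrightarrow> real (a_count q (Suc m) k) \<le> s * a_count q m k"
  proof -
    fix m assume m: "m \<ge> k"
    have "real (a_count q (m-k+k) k) \<le> real q^k * a_count q (m-k) k"
      by (rule chain_up[where f="\<lambda>m. real (a_count q m k)", OF stepq]) auto
    then have "a_count q m k / real q^k \<le> a_count q (m-k) k" using m qpos assms
      by (subst pos_divide_le_eq) (auto simp: mult.commute)
    then have "(real q - 1) * (a_count q m k / real q^k) \<le> (real q - 1) * a_count q (m-k) k"
      by (rule mult_left_mono) (use assms in simp)
    moreover have "real (a_count q (Suc m) k) = real q * a_count q m k - (real q - 1) * a_count q (m-k) k"
      using a_rec[OF assms(2) m] assms by simp
    moreover have "s * a_count q m k = real q * a_count q m k - (real q - 1) * (a_count q m k / real q^k)"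
      unfolding s_def by (simp add: algebra_simps)
    ultimately show "real (a_count q (Suc m) k) \<le> s * a_count q m k" by linarith
  qed
  have "real (a_count q (k + (n-k)) k) \<le> s^(n-k) * a_count q k k"
    by (rule chain_up[where f="\<lambda>m. real (a_count q m k)", OF step s0])
  moreover have "real (a_count q k k) \<le> real q^k" using a_le[of q k k]
    by (metis of_nat_le_iff of_nat_power)
  ultimately have "real (a_count q (k + (n-k)) k) \<le> s^(n-k) * real q^k"
    by (meson mult_left_mono order_trans s0 zero_le_power)
  then have "real (a_count q n k) \<le> s^(n-k) * real q^k" using assms by simp
  then show ?thesis unfolding s_def by (simp add: mult.commute)
qed



lemma lower_part:
  fixes q n k :: nat
  assumes "q \<ge> 2" and "5 \<le> k" and "k \<le> n"
  defines "c1 \<equiv> (real q - 1) * real q powr (real (nat \<lceil>real k / 2\<rceil>) - real k / 2) / (2 * real q)"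
      and "c2 \<equiv> (real (nat \<lfloor>real n / real q ^ (k - 1)\<rfloor>) + 1) / (real n / real q ^ (k - 1))"
  shows "real q ^ n * ((real q - 1) / real q) powr (c2 * real n / real q ^ (k - 1))
           * exp (- (c2 / c1) * real n / real q powr (1.5 * real k - 1))
         \<le> real (a_count q n k)"
proof -
  define Q where "Q = real q ^ (k-1)"
  define M where "M = nat \<lfloor>real n / Q\<rfloor> + 1"
  define b0 where "b0 = (real q - 1) / real q"
  define b where "b = 1 - 1 / real q^k"
  have q0: "real q > 0" using assms by simp
  have qk: "real q^k = real q * real q^(k-1)" using assms
    by (cases k) auto
  have Qpos: "Q > 0" unfolding Q_def using assms by simp
  have npos: "real n > 0" using assms by simp
  have fl: "\<lfloor>real n / Q\<rfloor> \<ge> 0" using Qpos npos by simp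
  have RM: "real M = real_of_int \<lfloor>real n / Q\<rfloor> + 1" unfolding M_def using fl by simp
  have c2e: "c2 * real n / real q ^ (k - 1) = real M"
    unfolding c2_def M_def Q_def[symmetric] using Qpos npos fl by (simp add: field_simps)
  have b0pos: "b0 > 0" unfolding b0_def using assms by simp
  have pw: "b0 powr (c2 * real n / real q ^ (k - 1)) = b0 ^ M"
    unfolding c2e by (rule powr_realpow[OF b0pos])
  have c1nn: "c1 \<ge> 0" unfolding c1_def using assms by simp
  have c2nn: "c2 \<ge> 0" unfolding c2_def using Qpos npos Q_def by simp
  have E: "exp (- (c2 / c1) * real n / real q powr (1.5 * real k - 1)) \<le> 1"
    using c1nn c2nn by simp
  have "real n / Q < real_of_int \<lfloor>real n / Q\<rfloor> + 1" by linarith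
  then have "real n < (real_of_int \<lfloor>real n / Q\<rfloor> + 1) * Q" using pos_divide_less_eq[OF Qpos] by blast
  then have "real n < real M * Q" using RM by simp
  then have nMQ: "n \<le> M * q^(k-1)" unfolding Q_def
    by (metis less_imp_le of_nat_le_iff of_nat_mult of_nat_power)
  have qkpos: "real q^k \<ge> 1" using assms by simp
  have b01: "0 \<le> b" "b \<le> 1" unfolding b_def using qkpos by (auto simp: divide_le_eq)
  have "b ^ n \<ge> b ^ (M * q^(k-1))" by (rule power_decreasing[OF nMQ b01])
  moreover have "b ^ (M * q^(k-1)) = (b ^ (q^(k-1))) ^ M" by (metis mult.commute power_mult)
  moreover have "b ^ (q^(k-1)) \<ge> b0"
  proof -
    have "1 + real (q^(k-1)) * (- 1 / real q^k) \<le> (1 + (- 1/real q^k)) ^ (q^(k-1))"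
      by (rule Bernoulli_inequality) (use qkpos in \<open>simp add: divide_le_eq\<close>)
    moreover have "1 + real (q^(k-1)) * (- 1 / real q^k) = b0"
      unfolding b0_def qk using q0 Qpos by (simp add: field_simps Q_def)
    moreover have "1 + (- 1/real q^k) = b" unfolding b_def by simp
    ultimately show ?thesis by simp
  qed
  then have "(b ^ (q^(k-1))) ^ M \<ge> b0 ^ M" by (rule power_mono) (use b0pos in simp)
  ultimately have bb: "b0 ^ M \<le> b ^ n" by linarith
  have rb: "real q - 1/real q^(k-1) = real q * b" unfolding b_def qk
    using q0 Qpos by (simp add: field_simps Q_def)
  have low: "real (a_count q n k) \<ge> real q^n * b^n"
    using low_bound[of q k n] assms rb by (simp add: power_mult_distrib)
  have "real q ^ n * b0 powr (c2 * real n / real q ^ (k - 1))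
           * exp (- (c2 / c1) * real n / real q powr (1.5 * real k - 1))
        \<le> real q ^ n * b0 powr (c2 * real n / real q ^ (k - 1))"
    by (rule mult_left_le[OF E]) (use b0pos in simp)
  also have "\<dots> = real q^n * b0^M" unfolding pw by (rule refl)
  also have "\<dots> \<le> real q^n * b^n" by (rule mult_left_mono[OF bb]) simp
  finally show ?thesis using low unfolding b0_def by linarith
qed



lemma upper_part:
  fixes q n k :: nat
  assumes "q \<ge> 2" and "5 \<le> k" and "k \<le> n"
  defines "c3 \<equiv> log (real q) (exp 1) * (real q - 1)^2 / (2 * real q ^ 2)"
  shows "real (a_count q n k) \<le> real q powr (real n - c3 * (real n - 2 * real k) / real q ^ k)"
proof -
  define t where "t = (real q - 1) / real q^(k+1)"
  define D where "D = real n - 2 * real k"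
  have q0: "real q > 0" using assms by simp
  have qk1: "real q^(k+1) = real q * real q^k" by simp
  have qkp: "real q^k \<ge> 1" using assms by simp
  have t0: "t \<ge> 0" unfolding t_def using assms by simp
  have t1: "t \<le> 1"
  proof -
    have "real q \<le> real q * real q^k" using qkp q0 by simp
    then have "real q - 1 \<le> real q * real q^k" by linarith
    then have "(real q - 1) / (real q * real q^k) \<le> 1" using q0 qkp by (simp add: divide_le_eq)
    then show ?thesis unfolding t_def qk1 .
  qed
  have sq: "real q - (real q - 1)/real q^k = real q * (1 - t)"
    unfolding t_def qk1 using q0 qkp by (simp add: field_simps)
  have up: "real (a_count q n k) \<le> real q^k * (real q * (1 - t))^(n-k)"
    using up_bound[of q k n] assms sq by simp
  also have "\<dots> = real q^n * (1 - t)^(n-k)"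
  proof -
    have "real q^k * real q^(n-k) = real q^n" using assms by (simp add: power_add[symmetric])
    then show ?thesis by (simp add: power_mult_distrib)
  qed
  also have "\<dots> \<le> real q^n * exp (- t)^(n-k)"
  proof (rule mult_left_mono)
    show "(1 - t)^(n-k) \<le> exp (- t)^(n-k)"
      by (rule power_mono) (use t1 exp_ge_add_one_self[of "-t"] in auto)
  qed simp
  also have "\<dots> = exp (real n * ln (real q) - real (n-k) * t)"
  proof -
    have "exp (real n * ln (real q)) = real q^n" using q0 by (simp add: exp_of_nat_mult)
    moreover have "exp (real (n-k) * (- t)) = exp (- t)^(n-k)" by (rule exp_of_nat_mult)
    moreover have "exp (real n * ln (real q) - real (n-k) * t) = exp (real n * ln (real q)) * exp (real (n-k) * (- t))"
      by (simp add: exp_add[symmetric])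
    ultimately show ?thesis by simp
  qed
  also have "\<dots> \<le> exp ((real n - c3 * D / real q ^ k) * ln (real q))"
  proof -
    have lnq: "ln (real q) > 0" using assms by simp
    have c3l: "c3 * ln (real q) = (real q - 1)^2 / (2 * real q^2)"
      unfolding c3_def log_def using lnq by simp
    have key: "(real q - 1)^2 * D \<le> 2 * real q * (real q - 1) * real (n-k)"
    proof -
      have "D \<le> real (n-k)" unfolding D_def using assms by simp
      moreover have "real (n-k) \<ge> 0" by simp
      have a1: "(real q - 1) * D \<le> (real q - 1) * real (n-k)"
        by (rule mult_left_mono[OF \<open>D \<le> real (n-k)\<close>]) (use assms in simp)
      have a2: "(real q - 1) * real (n-k) \<le> (2 * real q) * real (n-k)"
        by (rule mult_right_mono) simp_all
      from a1 a2 have "(real q - 1) * D \<le> 2 * real q * real (n-k)" by linarith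
      then have "(real q - 1) * ((real q - 1) * D) \<le> (real q - 1) * (2 * real q * real (n-k))"
        by (rule mult_left_mono) (use assms in simp)
      then show ?thesis by (simp add: power2_eq_square algebra_simps)
    qed
    have "c3 * D / real q^k * ln (real q) = (real q - 1)^2 * D / (2 * real q^(k+2))"
      using c3l by (simp add: power_add field_simps power2_eq_square)
    also have "\<dots> \<le> 2 * real q * (real q - 1) * real (n-k) / (2 * real q^(k+2))"
      by (rule divide_right_mono[OF key]) simp
    also have "\<dots> = real (n-k) * t"
      unfolding t_def using q0 by (simp add: power_add field_simps)
    finally have "c3 * D / real q^k * ln (real q) \<le> real (n-k) * t" .
    then show ?thesis by (simp add: algebra_simps)
  qed
  also have "\<dots> = real q powr (real n - c3 * D / real q ^ k)"
    using q0 by (simp add: powr_def)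
  finally show ?thesis unfolding D_def .
qed


theorem lemma1:
  fixes q n k :: nat
  assumes "q \<ge> 2" and "5 \<le> k" and "k \<le> n"
  defines "c1 \<equiv> (real q - 1) * real q powr (real (nat \<lceil>real k / 2\<rceil>) - real k / 2) / (2 * real q)"
      and "c2 \<equiv> (real (nat \<lfloor>real n / real q ^ (k - 1)\<rfloor>) + 1) / (real n / real q ^ (k - 1))"
      and "c3 \<equiv> log (real q) (exp 1) * (real q - 1)^2 / (2 * real q ^ 2)"
  shows "real q ^ n * ((real q - 1) / real q) powr (c2 * real n / real q ^ (k - 1))
           * exp (- (c2 / c1) * real n / real q powr (1.5 * real k - 1))
         \<le> real (a_count q n k)
       \<and> real (a_count q n k) \<le> real q powr (real n - c3 * (real n - 2 * real k) / real q ^ k)"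
  using lower_part[OF assms(1-3)] upper_part[OF assms(1-3)]
  unfolding c1_def c2_def c3_def by blast

end
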